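(* Let $\mathcal{T}$ be a single-elimination tournament and $\mathcal{B}$ a set of brackets of $\mathcal{T}$. If there exist two distinct players $a,b$ such that $B_i(x_{a,b})\notin\{a,b\}$ for every $B_i\in\mathcal{B}$, then $\mathcal{B}$ is not $\sigma$-resolving for any scoring system $\sigma$.
   Context: A single-elimination tournament is a finite directed graph $\mathcal{T}$ such that: (a) $\mathcal{T}$ has exactly one sink (vertex with no out-neighbours); (b) every non-sink vertex has exactly one out-neighbour; (c) $\mathcal{T}$ has no directed cycles; (d) $|N^-(v)|\ne 1$ for every vertex $v$, where $N^-(v)$ denotes the set of in-neighbours of $v$. The players $P(\mathcal{T})$ are the sources and the matches are $M(\mathcal{T})=V(\mathcal{T})\setminus P(\mathcal{T})$. For a vertex $u$, $P(u)$ is the set of players $a$ for which there is a directed walk from $a$ to $u$ (length $0$ allowed). For distinct players $a,b$, $x_{a,b}$ denotes the unique match $x$ having in-neighbours $u_a,u_b\in N^-(x)$ with $P(u_a)\cap\{a,b\}=\{a\}$ and $P(u_b)\cap\{a,b\}=\{b\}$ (such a match exists and is unique). A bracket is a function $B:V(\mathcal{T})\to P(\mathcal{T})$ with $B(a)=a$ for every player $a$ and $B(x)\in\{B(u):u\in N^-(x)\}$ for every match $x$. A scoring system is any function $\sigma:M(\mathcal{T})\to\mathbb{R}_{>0}$. For brackets $B,B'$ let $\mathrm{score}_\sigma(B,B')=\sum_{x\in M(\mathcal{T}):\,B(x)=B'(x)}\sigma(x)$. A set of brackets $\mathcal{B}$ is $\sigma$-resolving if for every pair of distinct brackets $B\ne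 B'$ there is $B_i\in\mathcal{B}$ with $\mathrm{score}_\sigma(B_i,B)\ne\mathrm{score}_\sigma(B_i,B')$. *)

theory Defs
  imports Main "HOL.Real"
begin

definition out_nbrs :: "('v \<times> 'v) set \<Rightarrow> 'v \<Rightarrow> 'v set" where
  "out_nbrs E v = {w. (v, w) \<in> E}"

definition in_nbrs :: "('v \<times> 'v) set \<Rightarrow> 'v \<Rightarrow> 'v set" where
  "in_nbrs E v = {u. (u, v) \<in> E}"

definition single_elim_tournament :: "'v set \<Rightarrow> ('v \<times> 'v) set \<Rightarrow> bool" where
  "single_elim_tournament V E \<longleftrightarrow>
     finite V \<and> E \<subseteq> V \<times> V \<and>
     (\<exists>!s. s \<in> V \<and> out_nbrs E s = {}) \<and>
     (\<forall>v\<in>V. out_nbrs E v \<noteq> {} \<longrightarrow> card (out_nbrs E v) = 1) \<and>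
     (\<forall>v. (v, v) \<notin> E\<^sup>+) \<and>
     (\<forall>v\<in>V. card (in_nbrs E v) \<noteq> 1)"

definition players :: "'v set \<Rightarrow> ('v \<times> 'v) set \<Rightarrow> 'v set" where
  "players V E = {v \<in> V. in_nbrs E v = {}}"

definition matches :: "'v set \<Rightarrow> ('v \<times> 'v) set \<Rightarrow> 'v set" where
  "matches V E = V - players V E"

definition feeders :: "'v set \<Rightarrow> ('v \<times> 'v) set \<Rightarrow> 'v \<Rightarrow> 'v set" where
  "feeders V E u = {a \<in> players V E. (a, u) \<in> E\<^sup>*}"

definition meet_match :: "'v set \<Rightarrow> ('v \<times> 'v) set \<Rightarrow> 'v \<Rightarrow> 'v \<Rightarrow> 'v" where
  "meet_match V E a b = (THE x. x \<in> matches V E \<and>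
      (\<exists>ua ub. ua \<in> in_nbrs E x \<and> ub \<in> in_nbrs E x \<and>
         feeders V E ua \<inter> {a, b} = {a} \<and> feeders V E ub \<inter> {a, b} = {b}))"

text \<open>Brackets are functions on V; to make equality of brackets meaningful they
  are taken to be extensional (value undefined outside V).\<close>
definition bracket :: "'v set \<Rightarrow> ('v \<times> 'v) set \<Rightarrow> ('v \<Rightarrow> 'v) \<Rightarrow> bool" where
  "bracket V E B \<longleftrightarrow>
     (\<forall>a\<in>players V E. B a = a) \<and>
     (\<forall>x\<in>matches V E. B x \<in> B ` in_nbrs E x) \<and>
     (\<forall>v. v \<notin> V \<longrightarrow> B v = undefined)"

definition scoring_system :: "'v set \<Rightarrow> ('v \<times> 'v) set \<Rightarrow> ('v \<Rightarrow> real) \<Rightarrow> bool" where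
  "scoring_system V E \<sigma> \<longleftrightarrow> (\<forall>x\<in>matches V E. \<sigma> x > 0)"

definition score :: "'v set \<Rightarrow> ('v \<times> 'v) set \<Rightarrow> ('v \<Rightarrow> real) \<Rightarrow> ('v \<Rightarrow> 'v) \<Rightarrow> ('v \<Rightarrow> 'v) \<Rightarrow> real" where
  "score V E \<sigma> B B' = (\<Sum>x\<in>{x \<in> matches V E. B x = B' x}. \<sigma> x)"

definition resolving :: "'v set \<Rightarrow> ('v \<times> 'v) set \<Rightarrow> ('v \<Rightarrow> real) \<Rightarrow> ('v \<Rightarrow> 'v) set \<Rightarrow> bool" where
  "resolving V E \<sigma> \<B> \<longleftrightarrow>
     (\<forall>B B'. bracket V E B \<longrightarrow> bracket V E B' \<longrightarrow> B \<noteq> B' \<longrightarrow>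
        (\<exists>Bi\<in>\<B>. score V E \<sigma> Bi B \<noteq> score V E \<sigma> Bi B'))"

end

theory Submission
  imports Defs
begin

definition rb :: "'v set \<Rightarrow> ('v \<times> 'v) set \<Rightarrow> ('v \<Rightarrow> nat) \<Rightarrow> 'v \<Rightarrow> 'v" where
  "rb V E r v = (if v \<in> V then inv_into (feeders V E v) r (Min (r ` feeders V E v)) else undefined)"

context
  fixes V :: "'v set" and E :: "('v \<times> 'v) set"
  assumes T: "single_elim_tournament V E"
begin

lemma finV: "finite V" using T unfolding single_elim_tournament_def by blast
lemma EV: "E \<subseteq> V \<times> V" using T unfolding single_elim_tournament_def by blast
lemma finE: "finite E" using finite_subset[OF EV] finV by blast
lemma acyclicE: "acyclic E" using T unfolding single_elim_tournament_def acyclic_def by blast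
lemma wfE: "wf E" using finite_acyclic_wf finE acyclicE by blast
lemma wfE': "wf (E\<inverse>)" using finite_acyclic_wf[of "E\<inverse>"] finE acyclicE
  by (simp add: acyclic_converse)
lemma acyc: "(v, v) \<notin> E\<^sup>+" using acyclicE unfolding acyclic_def by blast

lemma func: assumes "(u, v) \<in> E" "(u, w) \<in> E" shows "v = w"
proof -
  have "u \<in> V" using assms EV by blast
  moreover have "out_nbrs E u \<noteq> {}" using assms by (auto simp: out_nbrs_def)
  ultimately have "card (out_nbrs E u) = 1" using T unfolding single_elim_tournament_def by blast
  then obtain z where "out_nbrs E u = {z}" by (rule card_1_singletonE)
  then show ?thesis using assms unfolding out_nbrs_def by (metis mem_Collect_eq singleton_iff)
qed

lemma player_noin: "p \<in> players V E \<Longrightarrow> (u, p) \<notin> E"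
  by (auto simp: players_def in_nbrs_def)

lemma rtrancl_to_player: assumes "p \<in> players V E" "(q, p) \<in> E\<^sup>*" shows "q = p"
  using assms(2) by (rule rtranclE) (use player_noin[OF assms(1)] in auto)

lemma feeders_player: "p \<in> players V E \<Longrightarrow> feeders V E p = {p}"
  using rtrancl_to_player by (auto simp: feeders_def)

lemma feeders_sub: "feeders V E v \<subseteq> players V E"
  by (auto simp: feeders_def)

lemma players_V: "players V E \<subseteq> V" by (auto simp: players_def)

lemma finite_feeders: "finite (feeders V E v)"
  using finite_subset[OF feeders_sub] finite_subset[OF players_V finV] by blast

lemma feeders_ne: "v \<in> V \<Longrightarrow> feeders V E v \<noteq> {}"
proof (induction v rule: wf_induct[OF wfE])
  case (1 v)
  show ?case
  proof (cases "in_nbrs E v = {}")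
    case True
    then have "v \<in> players V E" using 1 by (auto simp: players_def)
    then show ?thesis by (simp add: feeders_player)
  next
    case False
    then obtain u where u: "(u, v) \<in> E" by (auto simp: in_nbrs_def)
    then have "u \<in> V" using EV by blast
    with 1 u obtain p where "p \<in> feeders V E u" by blast
    then have "p \<in> feeders V E v" using u by (auto simp: feeders_def)
    then show ?thesis by blast
  qed
qed

lemma feeders_mono: "(u, v) \<in> E \<Longrightarrow> feeders V E u \<subseteq> feeders V E v"
  by (auto simp: feeders_def)

lemma feeders_match:
  assumes "x \<in> matches V E" "p \<in> feeders V E x"
  shows "\<exists>u. (u, x) \<in> E \<and> p \<in> feeders V E u"
proof -
  have "p \<noteq> x" using assms by (auto simp: matches_def feeders_def)
  moreover have "(p, x) \<in> E\<^sup>*" using assms by (auto simp: feeders_def)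
  ultimately have "(p, x) \<in> E\<^sup>+" by (simp add: rtrancl_eq_or_trancl)
  then obtain u where "(p, u) \<in> E\<^sup>*" "(u, x) \<in> E" using tranclD2 by metis
  then show ?thesis using assms by (auto simp: feeders_def)
qed

lemma chain: "(p, u) \<in> E\<^sup>* \<Longrightarrow> (p, w) \<in> E\<^sup>* \<Longrightarrow> (u, w) \<in> E\<^sup>* \<or> (w, u) \<in> E\<^sup>*"
proof (induction p arbitrary: w rule: converse_rtrancl_induct)
  case base
  then show ?case by blast
next
  case (step p p')
  from step.prems show ?case
  proof (rule converse_rtranclE)
    assume "p = w"
    then show ?thesis using step.hyps by (meson converse_rtrancl_into_rtrancl)
  next
    fix p'' assume "(p, p'') \<in> E" "(p'', w) \<in> E\<^sup>*"
    then have "p'' = p'" using func step.hyps(1) by blast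
    then show ?thesis using step.IH \<open>(p'', w) \<in> E\<^sup>*\<close> by blast
  qed
qed

lemma samepred_aux: assumes "(u, w) \<in> E\<^sup>*" "(u, v) \<in> E" "(w, v) \<in> E" shows "u = w"
proof (rule ccontr)
  assume "u \<noteq> w"
  then have "(u, w) \<in> E\<^sup>+" using assms(1) by (simp add: rtrancl_eq_or_trancl)
  then obtain y where "(u, y) \<in> E" "(y, w) \<in> E\<^sup>*" using tranclD by metis
  then have "(v, w) \<in> E\<^sup>*" using func assms(2) by blast
  then have "(v, v) \<in> E\<^sup>+" using assms(3) by (meson rtrancl_into_trancl1)
  then show False using acyc by blast
qed

lemma samepred: "(p, u) \<in> E\<^sup>* \<Longrightarrow> (p, w) \<in> E\<^sup>* \<Longrightarrow> (u, v) \<in> E \<Longrightarrow> (w, v) \<in> E \<Longrightarrow> u = w"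
  using chain samepred_aux by metis

lemma bracket_feeder: "bracket V E B \<Longrightarrow> v \<in> V \<Longrightarrow> B v \<in> feeders V E v"
proof (induction v rule: wf_induct[OF wfE])
  case (1 v)
  show ?case
  proof (cases "v \<in> players V E")
    case True
    then show ?thesis using 1 by (simp add: feeders_player bracket_def)
  next
    case False
    then have "v \<in> matches V E" using 1 by (simp add: matches_def)
    then have "B v \<in> B ` in_nbrs E v" using 1(2) unfolding bracket_def by blast
    then obtain u where u: "(u, v) \<in> E" "B v = B u" unfolding in_nbrs_def by blast
    then have "u \<in> V" using EV by blast
    then have "B u \<in> feeders V E u" using 1(1) u(1) 1(2) by blast
    then show ?thesis using u feeders_mono by auto
  qed
qed

lemma bracket_prop:
  "bracket V E B \<Longrightarrow> v \<in> V \<Longrightarrow> (w, v) \<in> E\<^sup>* \<Longrightarrow> (B v, w) \<in> E\<^sup>* \<Longrightarrow> B w = B v"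
proof (induction v arbitrary: w rule: wf_induct[OF wfE])
  case (1 v)
  show ?case
  proof (cases "w = v")
    case True then show ?thesis by simp
  next
    case False
    then have "(w, v) \<in> E\<^sup>+" using 1 by (simp add: rtrancl_eq_or_trancl)
    then obtain w' where w': "(w, w') \<in> E\<^sup>*" "(w', v) \<in> E" using tranclD2 by metis
    then have "v \<notin> players V E" using player_noin by blast
    then have "v \<in> matches V E" using 1 by (simp add: matches_def)
    then have "B v \<in> B ` in_nbrs E v" using 1(2) unfolding bracket_def by blast
    then obtain u where u: "(u, v) \<in> E" "B v = B u" unfolding in_nbrs_def by blast
    then have uV: "u \<in> V" using EV by blast
    have "(B u, u) \<in> E\<^sup>*" using bracket_feeder[OF 1(2) uV] by (simp add: feeders_def)
    moreover have "(B u, w') \<in> E\<^sup>*" using 1(5) u w' by simp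
    ultimately have "u = w'" using samepred u w' by blast
    have "(w, u) \<in> E\<^sup>*" using w' \<open>u = w'\<close> by simp
    moreover have "(B u, w) \<in> E\<^sup>*" using 1(5) u by simp
    ultimately have "B w = B u" using 1(1) u(1) uV 1(2) by blast
    then show ?thesis using u by simp
  qed
qed


lemma rb_mem:
  assumes inj: "inj_on r (players V E)" and v: "v \<in> V"
  shows "rb V E r v \<in> feeders V E v \<and> (\<forall>q\<in>feeders V E v. r (rb V E r v) \<le> r q)"
proof -
  let ?S = "feeders V E v"
  have ne: "r ` ?S \<noteq> {}" using feeders_ne[OF v] by blast
  have fin: "finite (r ` ?S)" using finite_feeders by blast
  have m: "Min (r ` ?S) \<in> r ` ?S" using Min_in[OF fin ne] .
  have eq: "rb V E r v = inv_into ?S r (Min (r ` ?S))" using v by (simp add: rb_def)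
  have "rb V E r v \<in> ?S" using eq inv_into_into[OF m] by simp
  moreover have "r (rb V E r v) = Min (r ` ?S)" using eq f_inv_into_f[OF m] by simp
  moreover have "\<forall>q\<in>?S. Min (r ` ?S) \<le> r q" using fin by simp
  ultimately show ?thesis by simp
qed

lemma rb_char:
  assumes inj: "inj_on r (players V E)" and v: "v \<in> V"
    and p: "p \<in> feeders V E v" and le: "\<forall>q\<in>feeders V E v. r p \<le> r q"
  shows "rb V E r v = p"
proof -
  have 1: "rb V E r v \<in> feeders V E v" and 2: "r (rb V E r v) \<le> r p"
    using rb_mem[OF inj v] p by auto
  have "r (rb V E r v) = r p" using 2 le 1 by (meson order_antisym)
  moreover have "rb V E r v \<in> players V E" "p \<in> players V E" using 1 p feeders_sub by auto
  ultimately show ?thesis using inj by (meson inj_onD)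
qed

lemma rb_bracket:
  assumes inj: "inj_on r (players V E)"
  shows "bracket V E (rb V E r)"
  unfolding bracket_def
proof (intro conjI ballI allI impI)
  fix a assume a: "a \<in> players V E"
  then have "a \<in> V" using players_V by blast
  then show "rb V E r a = a" using rb_char[OF inj] a feeders_player by simp
next
  fix x assume x: "x \<in> matches V E"
  then have xV: "x \<in> V" by (simp add: matches_def)
  let ?p = "rb V E r x"
  have pm: "?p \<in> feeders V E x" "\<forall>q\<in>feeders V E x. r ?p \<le> r q" using rb_mem[OF inj xV] by auto
  then obtain u where u: "(u, x) \<in> E" "?p \<in> feeders V E u" using feeders_match x by blast
  have uV: "u \<in> V" using u EV by blast
  have "rb V E r u = ?p" using rb_char[OF inj uV u(2)] pm(2) feeders_mono[OF u(1)] by blast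
  moreover have "u \<in> in_nbrs E x" using u(1) unfolding in_nbrs_def by simp
  ultimately show "?p \<in> rb V E r ` in_nbrs E x" by (metis image_eqI)
next
  fix v assume "v \<notin> V"
  then show "rb V E r v = undefined" by (simp add: rb_def)
qed

lemma reach_sink:
  assumes s: "s \<in> V" "out_nbrs E s = {}"
  shows "v \<in> V \<Longrightarrow> (v, s) \<in> E\<^sup>*"
proof (induction v rule: wf_induct[OF wfE'])
  case (1 v)
  show ?case
  proof (cases "out_nbrs E v = {}")
    case True
    then have "v = s" using T s 1(2) unfolding single_elim_tournament_def by blast
    then show ?thesis by simp
  next
    case False
    then obtain w where w: "(v, w) \<in> E" by (auto simp: out_nbrs_def)
    then have "w \<in> V" using EV by blast
    then have "(w, s) \<in> E\<^sup>*" using 1(1) w by blast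
    then show ?thesis using w by (meson converse_rtrancl_into_rtrancl)
  qed
qed

lemma meet:
  assumes a: "a \<in> players V E" and b: "b \<in> players V E" and ab: "a \<noteq> b"
  shows "meet_match V E a b \<in> V \<and> (a, meet_match V E a b) \<in> E\<^sup>* \<and> (b, meet_match V E a b) \<in> E\<^sup>*
     \<and> (\<forall>v. (a, v) \<in> E\<^sup>* \<longrightarrow> (b, v) \<in> E\<^sup>* \<longrightarrow> (meet_match V E a b, v) \<in> E\<^sup>*)"
proof -
  obtain s where s: "s \<in> V" "out_nbrs E s = {}" using T unfolding single_elim_tournament_def by blast
  define D where "D = {v. (a, v) \<in> E\<^sup>* \<and> (b, v) \<in> E\<^sup>*}"
  have "a \<in> V" "b \<in> V" using a b players_V by auto
  then have sD: "s \<in> D" using reach_sink[OF s] by (simp add: D_def)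
  obtain m where mD: "m \<in> D" and mmin: "\<And>y. (y, m) \<in> E\<^sup>+ \<Longrightarrow> y \<notin> D"
    using wf_trancl[OF wfE] sD unfolding wf_eq_minimal by metis
  have below: "(m, x) \<in> E\<^sup>*" if xD: "x \<in> D" for x
  proof -
    have "(m, x) \<in> E\<^sup>* \<or> (x, m) \<in> E\<^sup>*" using chain mD xD unfolding D_def by blast
    moreover have "\<not> (x, m) \<in> E\<^sup>+" using mmin xD by blast
    ultimately show ?thesis by (metis rtrancl_eq_or_trancl rtrancl.rtrancl_refl)
  qed
  have am: "(a, m) \<in> E\<^sup>*" and bm: "(b, m) \<in> E\<^sup>*" using mD by (auto simp: D_def)
  have "a \<noteq> m" using rtrancl_to_player[OF a] bm ab by blast
  then have "(a, m) \<in> E\<^sup>+" using am by (simp add: rtrancl_eq_or_trancl)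
  then obtain ua where ua: "(a, ua) \<in> E\<^sup>*" "(ua, m) \<in> E" using tranclD2 by metis
  have "b \<noteq> m" using rtrancl_to_player[OF b] am ab by blast
  then have "(b, m) \<in> E\<^sup>+" using bm by (simp add: rtrancl_eq_or_trancl)
  then obtain ub where ub: "(b, ub) \<in> E\<^sup>*" "(ub, m) \<in> E" using tranclD2 by metis
  have "b \<notin> feeders V E ua"
  proof
    assume "b \<in> feeders V E ua"
    then have "ua \<in> D" using ua by (simp add: D_def feeders_def)
    moreover have "(ua, m) \<in> E\<^sup>+" using ua by blast
    ultimately show False using mmin by blast
  qed
  moreover have "a \<in> feeders V E ua" using a ua by (simp add: feeders_def)
  ultimately have fa: "feeders V E ua \<inter> {a, b} = {a}" by blast
  have "a \<notin> feeders V E ub"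
  proof
    assume "a \<in> feeders V E ub"
    then have "ub \<in> D" using ub by (simp add: D_def feeders_def)
    moreover have "(ub, m) \<in> E\<^sup>+" using ub by blast
    ultimately show False using mmin by blast
  qed
  moreover have "b \<in> feeders V E ub" using b ub by (simp add: feeders_def)
  ultimately have fb: "feeders V E ub \<inter> {a, b} = {b}" by blast
  have mV: "m \<in> V" using ua EV by blast
  have "m \<notin> players V E" using ua player_noin by blast
  then have mM: "m \<in> matches V E" using mV by (simp add: matches_def)
  let ?P = "\<lambda>x. x \<in> matches V E \<and>
      (\<exists>ua ub. ua \<in> in_nbrs E x \<and> ub \<in> in_nbrs E x \<and>
         feeders V E ua \<inter> {a, b} = {a} \<and> feeders V E ub \<inter> {a, b} = {b})"
  have Pm: "?P m" using mM fa fb ua(2) ub(2) unfolding in_nbrs_def by blast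
  have uniq: "x = m" if Px: "?P x" for x
  proof -
    obtain ua' ub' where u': "(ua', x) \<in> E" "(ub', x) \<in> E"
      "feeders V E ua' \<inter> {a, b} = {a}" "feeders V E ub' \<inter> {a, b} = {b}"
      using Px unfolding in_nbrs_def by blast
    have aua: "(a, ua') \<in> E\<^sup>*" using u'(3) by (auto simp: feeders_def)
    have nb: "(b, ua') \<notin> E\<^sup>*"
    proof
      assume "(b, ua') \<in> E\<^sup>*"
      then have "b \<in> feeders V E ua' \<inter> {a, b}" using b by (simp add: feeders_def)
      then show False using u'(3) ab by simp
    qed
    have "(b, ub') \<in> E\<^sup>*" using u'(4) by (auto simp: feeders_def)
    then have bx: "(b, x) \<in> E\<^sup>*" using u'(2) by (rule rtrancl_into_rtrancl)
    have ax: "(a, x) \<in> E\<^sup>*" using aua u'(1) by (rule rtrancl_into_rtrancl)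
    have "x \<in> D" using ax bx by (simp add: D_def)
    then have mx: "(m, x) \<in> E\<^sup>*" using below by blast
    show "x = m"
    proof (rule ccontr)
      assume xm: "x \<noteq> m"
      then have mx': "(m, x) \<in> E\<^sup>+" using mx by (simp add: rtrancl_eq_or_trancl)
      have "(ua', m) \<in> E\<^sup>* \<or> (m, ua') \<in> E\<^sup>*" using chain aua am by blast
      moreover have "(m, ua') \<notin> E\<^sup>*" using nb bm by (meson rtrancl_trans)
      ultimately have "(ua', m) \<in> E\<^sup>*" by blast
      moreover have "ua' \<noteq> m" using nb bm by blast
      ultimately have "(ua', m) \<in> E\<^sup>+" by (simp add: rtrancl_eq_or_trancl)
      then obtain y where y: "(ua', y) \<in> E" "(y, m) \<in> E\<^sup>*" using tranclD by metis
      have "y = x" using func[OF y(1) u'(1)] .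
      then have "(x, m) \<in> E\<^sup>*" using y(2) by simp
      then have "(m, m) \<in> E\<^sup>+" using mx' by (rule trancl_rtrancl_trancl[rotated])
      then show False using acyc by blast
    qed
  qed
  have "meet_match V E a b = m" unfolding meet_match_def
    using Pm uniq by (rule the_equality)
  then show ?thesis using mV am bm below by (simp add: D_def)
qed

end

theorem proposition4p3:
  fixes V :: "'v set" and E :: "('v \<times> 'v) set" and \<B> :: "('v \<Rightarrow> 'v) set"
  assumes "single_elim_tournament V E"
    and "\<forall>B\<in>\<B>. bracket V E B"
    and "a \<in> players V E" and "b \<in> players V E" and "a \<noteq> b"
    and "\<forall>Bi\<in>\<B>. Bi (meet_match V E a b) \<notin> {a, b}"
  shows "\<forall>\<sigma>. scoring_system V E \<sigma> \<longrightarrow> \<not> resolving V E \<sigma> \<B>"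
proof (intro allI impI notI)
  fix \<sigma> assume res: "resolving V E \<sigma> \<B>"
  note T = assms(1)
  have a: "a \<in> players V E" and b: "b \<in> players V E" and ab: "a \<noteq> b" using assms by auto
  have finP: "finite (players V E)" using finite_subset[OF players_V[OF T] finV[OF T]] .
  obtain f :: "'v \<Rightarrow> nat" where f: "inj_on f (players V E)"
    using finite_imp_inj_to_nat_seg[OF finP] by blast
  define r where "r = (\<lambda>p. if p = a then 0 else if p = b then 1 else f p + 2)"
  define r' where "r' = (\<lambda>p. if p = b then 0 else if p = a then 1 else f p + 2)"
  have ir: "inj_on r (players V E)" using f ab unfolding r_def inj_on_def by auto
  have ir': "inj_on r' (players V E)" using f ab unfolding r'_def inj_on_def by auto
  define B where "B = rb V E r"
  define B' where "B' = rb V E r'"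
  have brB: "bracket V E B" unfolding B_def using rb_bracket[OF T ir] .
  have brB': "bracket V E B'" unfolding B'_def using rb_bracket[OF T ir'] .
  have c1: "B v = a" if "v \<in> V" "a \<in> feeders V E v" for v
    unfolding B_def using rb_char[OF T ir that] by (simp add: r_def)
  have c2: "B v = b" if "v \<in> V" "a \<notin> feeders V E v" "b \<in> feeders V E v" for v
  proof -
    have "\<forall>q\<in>feeders V E v. r b \<le> r q" using that(2) ab by (auto simp: r_def)
    then show ?thesis unfolding B_def using rb_char[OF T ir that(1,3)] by blast
  qed
  have c1': "B' v = b" if "v \<in> V" "b \<in> feeders V E v" for v
    unfolding B'_def using rb_char[OF T ir' that] by (simp add: r'_def)
  have c2': "B' v = a" if "v \<in> V" "b \<notin> feeders V E v" "a \<in> feeders V E v" for v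
  proof -
    have "\<forall>q\<in>feeders V E v. r' a \<le> r' q" using that(2) ab by (auto simp: r'_def)
    then show ?thesis unfolding B'_def using rb_char[OF T ir' that(1,3)] by blast
  qed
  have c3: "B v = B' v" if v: "v \<in> V" "a \<notin> feeders V E v" "b \<notin> feeders V E v" for v
  proof -
    have m: "B v \<in> feeders V E v" "\<forall>q\<in>feeders V E v. r (B v) \<le> r q"
      using rb_mem[OF T ir v(1)] unfolding B_def by auto
    have eq: "\<forall>q\<in>feeders V E v. r q = r' q" using v(2,3) unfolding r_def r'_def by auto
    have "\<forall>q\<in>feeders V E v. r' (B v) \<le> r' q" using m eq by metis
    then have "B' v = B v" unfolding B'_def using rb_char[OF T ir' v(1) m(1)] by blast
    then show ?thesis by simp
  qed
  have M: "meet_match V E a b \<in> V \<and> (a, meet_match V E a b) \<in> E\<^sup>* \<and> (b, meet_match V E a b) \<in> E\<^sup>*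
     \<and> (\<forall>v. (a, v) \<in> E\<^sup>* \<longrightarrow> (b, v) \<in> E\<^sup>* \<longrightarrow> (meet_match V E a b, v) \<in> E\<^sup>*)"
    using meet[OF T a b ab] .
  define m where "m = meet_match V E a b"
  have mV: "m \<in> V" and am: "a \<in> feeders V E m" and bm: "b \<in> feeders V E m"
    using M a b unfolding m_def feeders_def by auto
  have "B m \<noteq> B' m" using c1[OF mV am] c1'[OF mV bm] ab by simp
  then have "B \<noteq> B'" by metis
  then obtain Bi where Bi: "Bi \<in> \<B>" and ne: "score V E \<sigma> Bi B \<noteq> score V E \<sigma> Bi B'"
    using res brB brB' unfolding resolving_def by blast
  have bBi: "bracket V E Bi" using Bi assms(2) by blast
  have Bim: "Bi m \<notin> {a, b}" using Bi assms(6) unfolding m_def by blast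
  have notab: "Bi v \<notin> {a, b}" if v: "v \<in> V" "a \<in> feeders V E v" "b \<in> feeders V E v" for v
  proof
    assume h: "Bi v \<in> {a, b}"
    have mv: "(m, v) \<in> E\<^sup>*" using M v unfolding m_def feeders_def by auto
    have "(Bi v, m) \<in> E\<^sup>*" using h M unfolding m_def by auto
    then have "Bi m = Bi v" using bracket_prop[OF T bBi v(1) mv] by blast
    then show False using h Bim by simp
  qed
  have "{x \<in> matches V E. Bi x = B x} = {x \<in> matches V E. Bi x = B' x}"
  proof (intro Collect_cong conj_cong refl)
    fix x assume "x \<in> matches V E"
    then have xV: "x \<in> V" by (simp add: matches_def)
    show "(Bi x = B x) = (Bi x = B' x)"
    proof (cases "a \<in> feeders V E x"; cases "b \<in> feeders V E x")
      assume "a \<in> feeders V E x" "b \<in> feeders V E x"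
      then show ?thesis using notab[OF xV] c1[OF xV] c1'[OF xV] by auto
    next
      assume "a \<in> feeders V E x" "b \<notin> feeders V E x"
      then show ?thesis using c1[OF xV] c2'[OF xV] by auto
    next
      assume "a \<notin> feeders V E x" "b \<in> feeders V E x"
      then show ?thesis using c2[OF xV] c1'[OF xV] by auto
    next
      assume "a \<notin> feeders V E x" "b \<notin> feeders V E x"
      then show ?thesis using c3[OF xV] by auto
    qed
  qed
  then have "score V E \<sigma> Bi B = score V E \<sigma> Bi B'" unfolding score_def by simp
  then show False using ne by simp
qed

end
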